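(* If $\iota\in\mathbb C$ satisfies $\iota^4=1$, then the balanced Chekhov–Fock algebra $\mathcal Z^\iota(\lambda)$ is commutative.
   Context: $S$ is a closed oriented surface $\bar S$ of genus $g$ minus $s\ge1$ points, $2-2g-s<0$; $\lambda$ is an ideal triangulation (triangulation of $\bar S$ with vertices exactly the removed points) with edges $\lambda_1,\dots,\lambda_n$. Let $a_{ij}\in\{0,1,2\}$ be the number of times an end of $\lambda_j$ immediately succeeds an end of $\lambda_i$ going counterclockwise around a puncture, $\sigma_{ij}=a_{ij}-a_{ji}$. For $\iota\in\mathbb C-\{0\}$, $\mathcal T^\iota(\lambda)$ is the algebra generated by $Z_i^{\pm1}$ with relations $Z_iZ_j=\iota^{2\sigma_{ij}}Z_jZ_i$, and the balanced Chekhov–Fock algebra $\mathcal Z^\iota(\lambda)$ is its subalgebra generated by the monomials $Z_1^{k_1}\cdots Z_n^{k_n}$ such that $k_{i_1}+k_{i_2}+k_{i_3}$ is even whenever $\lambda_{i_1},\lambda_{i_2},\lambda_{i_3}$ are the sides of a face of $\lambda$. *)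

theory Defs
  imports Complex_Main
begin

text \<open>Combinatorial model of an ideal triangulation \<lambda> of a punctured oriented surface.
  Faces form a finite set F; for a face f, side f 0, side f 1, side f 2 are the labels
  (in {0..<n}, i.e. edges \<lambda>_1..\<lambda>_n re-indexed from 0) of its three sides, listed in
  counterclockwise order around the boundary of f.  Sides carrying the same label are glued
  (orientation-reversingly); each edge is a side of exactly two face-sides.  The vertices
  of the glued closed surface are the punctures.\<close>

definition face_sides :: "'f set \<Rightarrow> ('f \<Rightarrow> nat \<Rightarrow> nat) \<Rightarrow> nat \<Rightarrow> ('f \<times> nat) set" where
  "face_sides F side i = {(f, r). f \<in> F \<and> r < 3 \<and> side f r = i}"

definition face_adj :: "'f set \<Rightarrow> ('f \<Rightarrow> nat \<Rightarrow> nat) \<Rightarrow> ('f \<times> 'f) set" where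
  "face_adj F side = {(f, g). f \<in> F \<and> g \<in> F \<and> (\<exists>r<3. \<exists>r'<3. side f r = side g r')}"

definition ideal_triangulation :: "'f set \<Rightarrow> ('f \<Rightarrow> nat \<Rightarrow> nat) \<Rightarrow> nat \<Rightarrow> bool" where
  "ideal_triangulation F side n \<longleftrightarrow>
     finite F \<and> F \<noteq> {} \<and>
     (\<forall>f\<in>F. \<forall>r<3. side f r < n) \<and>
     (\<forall>i<n. card (face_sides F side i) = 2) \<and>
     (\<forall>f\<in>F. \<forall>g\<in>F. (f, g) \<in> (face_adj F side)\<^sup>*)"

text \<open>a i j = number of times an end of edge j immediately succeeds an end of edge i going
  counterclockwise around a puncture = number of face corners where this happens.  In a
  face with counterclockwise sides (s0,s1,s2), at the corner between s_r and s_(r+1),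
  turning counterclockwise one passes from s_(r+1) to s_r.\<close>

definition a_coeff :: "'f set \<Rightarrow> ('f \<Rightarrow> nat \<Rightarrow> nat) \<Rightarrow> nat \<Rightarrow> nat \<Rightarrow> int" where
  "a_coeff F side i j = int (card {(f, r). f \<in> F \<and> r < 3 \<and>
       side f ((r + 1) mod 3) = i \<and> side f r = j})"

definition sigma :: "'f set \<Rightarrow> ('f \<Rightarrow> nat \<Rightarrow> nat) \<Rightarrow> nat \<Rightarrow> nat \<Rightarrow> int" where
  "sigma F side i j = a_coeff F side i j - a_coeff F side j i"

text \<open>The Chekhov--Fock algebra T^\<iota>(\<lambda>), realised on its basis of ordered monomials
  Z^k = Z_1^{k_1} ... Z_n^{k_n}, k \<in> Z^n (exponent vectors nat \<Rightarrow> int vanishing off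
  {0..<n}).  An element is a finitely supported coefficient function.  The relations
  Z_i Z_j = \<iota>^(2 \<sigma>_ij) Z_j Z_i give
  Z^k Z^l = \<iota>^(2 \<Sum>_{j<i} \<sigma>_ij k_i l_j) Z^(k+l).\<close>

definition expvecs :: "nat \<Rightarrow> (nat \<Rightarrow> int) set" where
  "expvecs n = {k. \<forall>i\<ge>n. k i = 0}"

definition csupp :: "((nat \<Rightarrow> int) \<Rightarrow> complex) \<Rightarrow> (nat \<Rightarrow> int) set" where
  "csupp x = {k. x k \<noteq> 0}"

definition CF_algebra :: "nat \<Rightarrow> ((nat \<Rightarrow> int) \<Rightarrow> complex) set" where
  "CF_algebra n = {x. finite (csupp x) \<and> csupp x \<subseteq> expvecs n}"

definition mono_twist :: "complex \<Rightarrow> 'f set \<Rightarrow> ('f \<Rightarrow> nat \<Rightarrow> nat) \<Rightarrow> nat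
    \<Rightarrow> (nat \<Rightarrow> int) \<Rightarrow> (nat \<Rightarrow> int) \<Rightarrow> complex" where
  "mono_twist \<iota> F side n k l =
     \<iota> powi (2 * (\<Sum>i<n. \<Sum>j<i. sigma F side i j * k i * l j))"

definition CF_mult :: "complex \<Rightarrow> 'f set \<Rightarrow> ('f \<Rightarrow> nat \<Rightarrow> nat) \<Rightarrow> nat
    \<Rightarrow> ((nat \<Rightarrow> int) \<Rightarrow> complex) \<Rightarrow> ((nat \<Rightarrow> int) \<Rightarrow> complex) \<Rightarrow> ((nat \<Rightarrow> int) \<Rightarrow> complex)" where
  "CF_mult \<iota> F side n x y = (\<lambda>m. \<Sum>k\<in>csupp x. \<Sum>l\<in>csupp y.
      if (\<lambda>i. k i + l i) = m then x k * y l * mono_twist \<iota> F side n k l else 0)"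

definition balanced_exp :: "'f set \<Rightarrow> ('f \<Rightarrow> nat \<Rightarrow> nat) \<Rightarrow> nat \<Rightarrow> (nat \<Rightarrow> int) set" where
  "balanced_exp F side n = {k. k \<in> expvecs n \<and>
      (\<forall>f\<in>F. even (k (side f 0) + k (side f 1) + k (side f 2)))}"

definition balanced_CF :: "'f set \<Rightarrow> ('f \<Rightarrow> nat \<Rightarrow> nat) \<Rightarrow> nat \<Rightarrow> ((nat \<Rightarrow> int) \<Rightarrow> complex) set" where
  "balanced_CF F side n = {x. finite (csupp x) \<and> csupp x \<subseteq> balanced_exp F side n}"

end

theory Submission imports Defs begin



lemma sum3: "(\<Sum>r<(3::nat). h r) = h 0 + h 1 + (h 2 :: int)"
  by (simp add: numeral_3_eq_3 numeral_2_eq_2 add.assoc)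

lemma face_even:
  fixes k0 k1 k2 l0 l1 l2 :: int
  assumes "even (k0+k1+k2)" "even (l0+l1+l2)"
  shows "even (k1*l0-k0*l1+k2*l1-k1*l2+k0*l2-k2*l0+(k0*l0+k1*l1+k2*l2))"
proof -
  obtain a where a: "k0+k1+k2 = 2*a" using assms(1) by (metis evenE)
  obtain b where b: "l0+l1+l2 = 2*b" using assms(2) by (metis evenE)
  have k2: "k2 = 2*a-k0-k1" using a by simp
  have l2: "l2 = 2*b-l0-l1" using b by simp
  have eq: "k1*l0-k0*l1+k2*l1-k1*l2+k0*l2-k2*l0+(k0*l0+k1*l1+k2*l2)
     = 2*(2*k1*l0 - k0*l1 + k0*l0 + k1*l1 + 2*a*b - 2*a*l0 - 2*b*k1)"
    unfolding k2 l2 by (simp add: algebra_simps)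
  show ?thesis by (subst eq) simp
qed

lemma fiber_sum:
  fixes h :: "nat \<Rightarrow> nat \<Rightarrow> int"
  assumes "finite C" "\<forall>c\<in>C. g1 c < n \<and> g2 c < n"
  shows "(\<Sum>i<n. \<Sum>j<n. int (card {c\<in>C. g1 c = i \<and> g2 c = j}) * h i j) = (\<Sum>c\<in>C. h (g1 c) (g2 c))"
proof -
  have "(\<Sum>c\<in>C. h (g1 c) (g2 c)) = (\<Sum>c\<in>C. \<Sum>i<n. \<Sum>j<n. if g1 c = i \<and> g2 c = j then h i j else 0)"
  proof (rule sum.cong[OF refl])
    fix c assume "c \<in> C"
    then have "g1 c < n" "g2 c < n" using assms(2) by auto
    then show "h (g1 c) (g2 c) = (\<Sum>i<n. \<Sum>j<n. if g1 c = i \<and> g2 c = j then h i j else 0)"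
    proof -
      have "\<And>i. (\<Sum>j<n. if g1 c = i \<and> g2 c = j then h i j else 0) = (if g1 c = i then h i (g2 c) else 0)"
        using \<open>g2 c < n\<close> by (auto simp: sum.delta)
      then show ?thesis using \<open>g1 c < n\<close> by (simp add: sum.delta)
    qed
  qed
  also have "\<dots> = (\<Sum>i<n. \<Sum>j<n. \<Sum>c\<in>C. if g1 c = i \<and> g2 c = j then h i j else 0)"
    by (simp add: sum.swap[of _ C])
  also have "\<dots> = (\<Sum>i<n. \<Sum>j<n. int (card {c\<in>C. g1 c = i \<and> g2 c = j}) * h i j)"
    using assms(1) by (simp add: sum.If_cases Int_def)
  finally show ?thesis by simp
qed

lemma fiber_sum1:
  fixes h :: "nat \<Rightarrow> int"
  assumes "finite C" "\<forall>c\<in>C. g c < n"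
  shows "(\<Sum>i<n. int (card {c\<in>C. g c = i}) * h i) = (\<Sum>c\<in>C. h (g c))"
proof -
  have "(\<Sum>c\<in>C. h (g c)) = (\<Sum>c\<in>C. \<Sum>i<n. if g c = i then h i else 0)"
  proof (rule sum.cong[OF refl])
    fix c assume "c \<in> C"
    then have "g c < n" using assms(2) by auto
    then show "h (g c) = (\<Sum>i<n. if g c = i then h i else 0)"
      by (simp add: sum.delta)
  qed
  also have "\<dots> = (\<Sum>i<n. \<Sum>c\<in>C. if g c = i then h i else 0)"
    by (rule sum.swap)
  also have "\<dots> = (\<Sum>i<n. int (card {c\<in>C. g c = i}) * h i)"
    using assms(1) by (simp add: sum.If_cases Int_def)
  finally show ?thesis by simp
qed

lemma antisym_sum:
  fixes T :: "nat \<Rightarrow> nat \<Rightarrow> int"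
  assumes "\<And>i. T i i = 0"
  shows "(\<Sum>i<n. \<Sum>j<n. T i j) = (\<Sum>i<n. \<Sum>j<i. T i j + T j i)"
proof (induction n)
  case 0 show ?case by simp
next
  case (Suc n)
  have "(\<Sum>i<Suc n. \<Sum>j<Suc n. T i j) = (\<Sum>i<n. \<Sum>j<n. T i j) + (\<Sum>i<n. T i n) + (\<Sum>j<n. T n j) + T n n"
    by (simp add: sum.distrib)
  also have "\<dots> = (\<Sum>i<n. \<Sum>j<i. T i j + T j i) + (\<Sum>j<n. T n j + T j n)"
    using Suc assms by (simp add: sum.distrib)
  finally show ?case by simp
qed

lemma W_even:
  fixes F :: "'f set" and side :: "'f \<Rightarrow> nat \<Rightarrow> nat"
  assumes tri: "ideal_triangulation F side n"
    and k: "k \<in> balanced_exp F side n" and l: "l \<in> balanced_exp F side n"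
  shows "even (\<Sum>i<n. \<Sum>j<n. sigma F side i j * k i * l j)"
proof -
  define C where "C = F \<times> {..<(3::nat)}"
  define g1 where "g1 = (\<lambda>c::'f\<times>nat. side (fst c) ((snd c + 1) mod 3))"
  define g2 where "g2 = (\<lambda>c::'f\<times>nat. side (fst c) (snd c))"
  have finF: "finite F" and bnd: "\<forall>f\<in>F. \<forall>r<3. side f r < n"
    and two: "\<forall>i<n. card (face_sides F side i) = 2"
    using tri unfolding ideal_triangulation_def by auto
  have finC: "finite C" unfolding C_def using finF by simp
  have gb: "\<forall>c\<in>C. g1 c < n \<and> g2 c < n" unfolding C_def g1_def g2_def using bnd by auto
  have aeq: "\<And>i j. a_coeff F side i j = int (card {c\<in>C. g1 c = i \<and> g2 c = j})"
  proof -
    fix i j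
    have "{(f, r). f \<in> F \<and> r < 3 \<and> side f ((r + 1) mod 3) = i \<and> side f r = j}
        = {c\<in>C. g1 c = i \<and> g2 c = j}" unfolding C_def g1_def g2_def by auto
    then show "a_coeff F side i j = int (card {c\<in>C. g1 c = i \<and> g2 c = j})"
      unfolding a_coeff_def by simp
  qed
  have A1: "(\<Sum>i<n. \<Sum>j<n. a_coeff F side i j * k i * l j) = (\<Sum>c\<in>C. k (g1 c) * l (g2 c))"
    using fiber_sum[OF finC gb, of "\<lambda>i j. k i * l j"] by (simp add: aeq mult.assoc)
  have "(\<Sum>i<n. \<Sum>j<n. a_coeff F side j i * k i * l j) = (\<Sum>j<n. \<Sum>i<n. a_coeff F side j i * k i * l j)"
    by (rule sum.swap)
  also have "\<dots> = (\<Sum>c\<in>C. k (g2 c) * l (g1 c))"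
    using fiber_sum[OF finC gb, of "\<lambda>i j. k j * l i"] by (simp add: aeq mult.assoc mult.left_commute)
  finally have A2: "(\<Sum>i<n. \<Sum>j<n. a_coeff F side j i * k i * l j) = (\<Sum>c\<in>C. k (g2 c) * l (g1 c))" .
  have W: "(\<Sum>i<n. \<Sum>j<n. sigma F side i j * k i * l j)
      = (\<Sum>c\<in>C. k (g1 c) * l (g2 c)) - (\<Sum>c\<in>C. k (g2 c) * l (g1 c))"
    unfolding A1[symmetric] A2[symmetric] sigma_def
    by (simp add: sum_subtractf left_diff_distrib)
  have D: "(\<Sum>c\<in>C. k (g2 c) * l (g2 c)) = (\<Sum>i<n. 2 * (k i * l i))"
  proof -
    have "(\<Sum>c\<in>C. k (g2 c) * l (g2 c)) = (\<Sum>i<n. int (card {c\<in>C. g2 c = i}) * (k i * l i))"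
      using fiber_sum1[OF finC, of g2 n "\<lambda>i. k i * l i"] gb by simp
    also have "\<dots> = (\<Sum>i<n. 2 * (k i * l i))"
    proof (rule sum.cong[OF refl])
      fix i assume "i \<in> {..<n}"
      have "{c\<in>C. g2 c = i} = face_sides F side i" unfolding C_def g2_def face_sides_def by auto
      then show "int (card {c\<in>C. g2 c = i}) * (k i * l i) = 2 * (k i * l i)"
        using two \<open>i \<in> {..<n}\<close> by simp
    qed
    finally show ?thesis .
  qed
  have E: "even ((\<Sum>c\<in>C. k (g1 c) * l (g2 c)) - (\<Sum>c\<in>C. k (g2 c) * l (g1 c)) + (\<Sum>c\<in>C. k (g2 c) * l (g2 c)))"
  proof -
    have "(\<Sum>c\<in>C. k (g1 c) * l (g2 c)) - (\<Sum>c\<in>C. k (g2 c) * l (g1 c)) + (\<Sum>c\<in>C. k (g2 c) * l (g2 c))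
        = (\<Sum>c\<in>C. k (g1 c) * l (g2 c) - k (g2 c) * l (g1 c) + k (g2 c) * l (g2 c))"
      by (simp add: sum_subtractf sum.distrib)
    also have "\<dots> = (\<Sum>f\<in>F. \<Sum>r<3. k (side f ((r + 1) mod 3)) * l (side f r) - k (side f r) * l (side f ((r + 1) mod 3)) + k (side f r) * l (side f r))"
      unfolding C_def g1_def g2_def by (simp only: sum.cartesian_product split_def)
    finally have eq: "(\<Sum>c\<in>C. k (g1 c) * l (g2 c)) - (\<Sum>c\<in>C. k (g2 c) * l (g1 c)) + (\<Sum>c\<in>C. k (g2 c) * l (g2 c)) = (\<Sum>f\<in>F. \<Sum>r<3. k (side f ((r + 1) mod 3)) * l (side f r) - k (side f r) * l (side f ((r + 1) mod 3)) + k (side f r) * l (side f r))" .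
    show ?thesis unfolding eq
    proof (rule dvd_sum)
      fix f assume f: "f \<in> F"
      have ek: "even (k (side f 0) + k (side f 1) + k (side f 2))" using k f unfolding balanced_exp_def by blast
      have el: "even (l (side f 0) + l (side f 1) + l (side f 2))" using l f unfolding balanced_exp_def by blast
      have fe: "(\<Sum>r<3. k (side f ((r + 1) mod 3)) * l (side f r) - k (side f r) * l (side f ((r + 1) mod 3)) + k (side f r) * l (side f r))
        = k (side f 1) * l (side f 0) - k (side f 0) * l (side f 1) + k (side f 2) * l (side f 1) - k (side f 1) * l (side f 2) + k (side f 0) * l (side f 2) - k (side f 2) * l (side f 0) + (k (side f 0) * l (side f 0) + k (side f 1) * l (side f 1) + k (side f 2) * l (side f 2))"
        unfolding sum3 by (simp add: numeral_2_eq_2)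
      show "2 dvd (\<Sum>r<3. k (side f ((r + 1) mod 3)) * l (side f r) - k (side f r) * l (side f ((r + 1) mod 3)) + k (side f r) * l (side f r))"
        unfolding fe by (rule face_even[OF ek el])
    qed
  qed
  have Z: "even (\<Sum>i<n. 2 * (k i * l i))" by (rule dvd_sum) simp
  show ?thesis unfolding W using E Z unfolding D using dvd_add_left_iff by blast
qed

lemma S_diff:
  fixes F :: "'f set" and side :: "'f \<Rightarrow> nat \<Rightarrow> nat"
  shows "(\<Sum>i<n. \<Sum>j<i. sigma F side i j * k i * l j) - (\<Sum>i<n. \<Sum>j<i. sigma F side i j * l i * k j)
     = (\<Sum>i<n. \<Sum>j<n. sigma F side i j * k i * l j)"
proof -
  have "(\<Sum>i<n. \<Sum>j<n. sigma F side i j * k i * l j)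
      = (\<Sum>i<n. \<Sum>j<i. sigma F side i j * k i * l j + sigma F side j i * k j * l i)"
    by (rule antisym_sum) (simp add: sigma_def)
  also have "\<dots> = (\<Sum>i<n. \<Sum>j<i. sigma F side i j * k i * l j - sigma F side i j * l i * k j)"
    by (intro sum.cong refl) (simp add: sigma_def algebra_simps)
  finally show ?thesis by (simp add: sum_subtractf)
qed

lemma twist_sym:
  fixes F :: "'f set" and side :: "'f \<Rightarrow> nat \<Rightarrow> nat"
  assumes tri: "ideal_triangulation F side n" and i4: "\<iota> ^ 4 = 1"
    and k: "k \<in> balanced_exp F side n" and l: "l \<in> balanced_exp F side n"
  shows "mono_twist \<iota> F side n k l = mono_twist \<iota> F side n l k"
proof -
  define A where "A = (\<Sum>i<n. \<Sum>j<i. sigma F side i j * k i * l j)"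
  define B where "B = (\<Sum>i<n. \<Sum>j<i. sigma F side i j * l i * k j)"
  have "even (A - B)" unfolding A_def B_def S_diff using W_even[OF tri k l] .
  then obtain m where m: "A - B = 2 * m" by (metis evenE)
  have nz: "\<iota> \<noteq> 0" using i4 by auto
  have "2 * A = 2 * B + 4 * m" using m by simp
  then have "\<iota> powi (2 * A) = \<iota> powi (2 * B) * \<iota> powi (4 * m)"
    using nz by (simp add: power_int_add)
  also have "\<iota> powi (4 * m) = (\<iota> powi 4) powi m"
    by (rule power_int_mult)
  also have "\<iota> powi 4 = \<iota> ^ 4"
    by (rule power_int_numeral)
  finally have "\<iota> powi (2 * A) = \<iota> powi (2 * B) * (\<iota> ^ 4) powi m" .
  then have "\<iota> powi (2 * A) = \<iota> powi (2 * B)" using i4 by simp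
  then show ?thesis unfolding mono_twist_def A_def B_def .
qed

theorem corollary3p3:
  fixes F :: "'f set" and side :: "'f \<Rightarrow> nat \<Rightarrow> nat" and n :: nat and \<iota> :: complex
  assumes "ideal_triangulation F side n"
    and "\<iota> ^ 4 = 1"
  shows "\<forall>x\<in>balanced_CF F side n. \<forall>y\<in>balanced_CF F side n.
           CF_mult \<iota> F side n x y = CF_mult \<iota> F side n y x"
proof (intro ballI)
  fix x y assume x: "x \<in> balanced_CF F side n" and y: "y \<in> balanced_CF F side n"
  have sx: "csupp x \<subseteq> balanced_exp F side n" and sy: "csupp y \<subseteq> balanced_exp F side n"
    using x y unfolding balanced_CF_def by auto
  show "CF_mult \<iota> F side n x y = CF_mult \<iota> F side n y x"
  proof
    fix m
    have "CF_mult \<iota> F side n y x m = (\<Sum>k\<in>csupp x. \<Sum>l\<in>csupp y.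
      if (\<lambda>i. l i + k i) = m then y l * x k * mono_twist \<iota> F side n l k else 0)"
      unfolding CF_mult_def by (rule sum.swap)
    also have "\<dots> = CF_mult \<iota> F side n x y m"
      unfolding CF_mult_def
    proof (intro sum.cong refl)
      fix k l assume "k \<in> csupp x" "l \<in> csupp y"
      then have "mono_twist \<iota> F side n l k = mono_twist \<iota> F side n k l"
        using twist_sym[OF assms] sx sy by blast
      then show "(if (\<lambda>i. l i + k i) = m then y l * x k * mono_twist \<iota> F side n l k else 0) =
        (if (\<lambda>i. k i + l i) = m then x k * y l * mono_twist \<iota> F side n k l else 0)"
        by (simp add: add.commute mult.commute)
    qed
    finally show "CF_mult \<iota> F side n x y m = CF_mult \<iota> F side n y x m" by simp
  qed
qed

end
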